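(* Under the hypotheses of the $O(\tau)$ convergence theorem, the limit curve $X:[0,\infty)\to\mathbb H$ of $\underline X_t^\tau$ is locally absolutely continuous in $\mathbb H$ and solves \[\dot X(t)=-\nabla\phi^{\#}_{\rho_0}(X(t))\ \text{ for a.e. }t\in(0,\infty),\qquad X(0)=\mathrm{Id},\] where $\dot X$ is the Fréchet (time) derivative of $X:[0,\infty)\to\mathbb H$.
   Context: Hypotheses of the $O(\tau)$ convergence theorem: the standing hypotheses (S) below hold for every $\tau$ in a family $\tau\downarrow0$ (and $|\lambda|\tau<1$ if $\lambda<0$), with $\lim_{\tau\downarrow0}\|X_0^\tau-\mathrm{Id}\|_{\mathbb H}=0$ and $\sup_\tau\|\nabla\phi^{\#}_{\rho_0}(X_0^\tau)\|_{\mathbb H}<\infty$; $\underline X_t^\tau:=X_n^\tau$ for $t\in[n\tau,(n+1)\tau)$, and $\underline X^\tau$ converges locally uniformly in $\mathbb H$ to a locally Lipschitz curve $X$. Standing hypotheses (S): $\rho_0\in\mathcal P_2(\mathbb R^d)$; $\mathbb H=L^2(\mathbb R^d;\rho_0)$ is the Hilbert space of $\rho_0$-square-integrable maps $\mathbb R^d\to\mathbb R^d$; $\phi:\mathcal P_2(\mathbb R^d)\to\mathbb R$ has lift $\phi^{\#}_{\rho_0}(\xi):=\phi(\xi_{\#}\rho_0)$ which is Fréchet differentiable on $\mathbb H$ (gradient $\nabla\phi^{\#}_{\rho_0}$), $\lambda$-convex on $\mathbb H$ for some $\lambda\in\mathbb R$, and $\inf_{\mathbb H}\phi^{\#}_{\rho_0}>-\infty$;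 $\tau>0$ satisfies $\lambda/2+1/\tau>0$. Scheme: $X_{n+1}^\tau$ is the unique minimizer over $\xi\in\mathbb H$ of $\tfrac12\phi^{\#}_{\rho_0}(\xi)+\tfrac12\langle\nabla\phi^{\#}_{\rho_0}(X_n^\tau),\xi\rangle_{\mathbb H}+\tfrac1{2\tau}\|\xi-X_n^\tau\|^2_{\mathbb H}$. *)

theory Defs
  imports "HOL-Probability.Probability"
begin

text \<open>Wasserstein space P_2(R^d): Borel probability measures with finite second moment.
  R^d is modelled by an arbitrary Euclidean space type 'a.\<close>
definition P2 :: "'a::euclidean_space measure \<Rightarrow> bool" where
  "P2 \<mu> \<longleftrightarrow> prob_space \<mu> \<and> sets \<mu> = sets borel \<and> integrable \<mu> (\<lambda>x. (norm x)\<^sup>2)"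

text \<open>Elements of H = L^2(R^d; rho0) (maps R^d -> R^d, square integrable), represented by
  functions; the Hilbert structure (inner product, norm) is the L^2 one, so that
  rho0-a.e. equal maps are identified through the norm.\<close>
definition inH :: "'a::euclidean_space measure \<Rightarrow> ('a \<Rightarrow> 'a) \<Rightarrow> bool" where
  "inH \<rho> \<xi> \<longleftrightarrow> \<xi> \<in> borel_measurable \<rho> \<and> integrable \<rho> (\<lambda>x. (norm (\<xi> x))\<^sup>2)"

definition Hinner :: "'a::euclidean_space measure \<Rightarrow> ('a \<Rightarrow> 'a) \<Rightarrow> ('a \<Rightarrow> 'a) \<Rightarrow> real" where
  "Hinner \<rho> \<xi> \<eta> = (\<integral>x. \<xi> x \<bullet> \<eta> x \<partial>\<rho>)"

definition Hnorm :: "'a::euclidean_space measure \<Rightarrow> ('a \<Rightarrow> 'a) \<Rightarrow> real" where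
  "Hnorm \<rho> \<xi> = sqrt (\<integral>x. (norm (\<xi> x))\<^sup>2 \<partial>\<rho>)"

definition lift :: "('a::euclidean_space measure \<Rightarrow> real) \<Rightarrow> 'a measure \<Rightarrow> ('a \<Rightarrow> 'a) \<Rightarrow> real" where
  "lift \<phi> \<rho> \<xi> = \<phi> (distr \<rho> borel \<xi>)"

definition H_gradient :: "'a::euclidean_space measure \<Rightarrow> (('a \<Rightarrow> 'a) \<Rightarrow> real) \<Rightarrow> (('a \<Rightarrow> 'a) \<Rightarrow> ('a \<Rightarrow> 'a)) \<Rightarrow> bool" where
  "H_gradient \<rho> F G \<longleftrightarrow> (\<forall>\<xi>. inH \<rho> \<xi> \<longrightarrow> inH \<rho> (G \<xi>) \<and>
     (\<forall>\<epsilon>>0. \<exists>\<delta>>0. \<forall>\<eta>. inH \<rho> \<eta> \<and> Hnorm \<rho> (\<lambda>x. \<eta> x - \<xi> x) < \<delta> \<longrightarrow>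
        \<bar>F \<eta> - F \<xi> - Hinner \<rho> (G \<xi>) (\<lambda>x. \<eta> x - \<xi> x)\<bar> \<le> \<epsilon> * Hnorm \<rho> (\<lambda>x. \<eta> x - \<xi> x)))"

definition H_lambda_convex :: "'a::euclidean_space measure \<Rightarrow> real \<Rightarrow> (('a \<Rightarrow> 'a) \<Rightarrow> real) \<Rightarrow> bool" where
  "H_lambda_convex \<rho> lam F \<longleftrightarrow> (\<forall>\<xi> \<eta> s. inH \<rho> \<xi> \<and> inH \<rho> \<eta> \<and> 0 \<le> s \<and> s \<le> 1 \<longrightarrow>
     F (\<lambda>x. (1 - s) *\<^sub>R \<xi> x + s *\<^sub>R \<eta> x)
       \<le> (1 - s) * F \<xi> + s * F \<eta> - lam / 2 * s * (1 - s) * (Hnorm \<rho> (\<lambda>x. \<xi> x - \<eta> x))\<^sup>2)"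

definition scheme_fun :: "'a::euclidean_space measure \<Rightarrow> (('a \<Rightarrow> 'a) \<Rightarrow> real) \<Rightarrow> (('a \<Rightarrow> 'a) \<Rightarrow> ('a \<Rightarrow> 'a))
     \<Rightarrow> real \<Rightarrow> ('a \<Rightarrow> 'a) \<Rightarrow> ('a \<Rightarrow> 'a) \<Rightarrow> real" where
  "scheme_fun \<rho> F G \<tau> Xn \<xi> = F \<xi> / 2 + Hinner \<rho> (G Xn) \<xi> / 2 + (Hnorm \<rho> (\<lambda>x. \<xi> x - Xn x))\<^sup>2 / (2 * \<tau>)"

definition is_scheme :: "'a::euclidean_space measure \<Rightarrow> (('a \<Rightarrow> 'a) \<Rightarrow> real) \<Rightarrow> (('a \<Rightarrow> 'a) \<Rightarrow> ('a \<Rightarrow> 'a))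
     \<Rightarrow> real \<Rightarrow> (nat \<Rightarrow> 'a \<Rightarrow> 'a) \<Rightarrow> bool" where
  "is_scheme \<rho> F G \<tau> X \<longleftrightarrow> (\<forall>n. inH \<rho> (X n)) \<and>
     (\<forall>n. \<forall>\<xi>. inH \<rho> \<xi> \<longrightarrow> scheme_fun \<rho> F G \<tau> (X n) (X (Suc n)) \<le> scheme_fun \<rho> F G \<tau> (X n) \<xi>)"

definition interp :: "real \<Rightarrow> (nat \<Rightarrow> 'b) \<Rightarrow> real \<Rightarrow> 'b" where
  "interp \<tau> X t = X (nat \<lfloor>t / \<tau>\<rfloor>)"

definition H_loc_abs_cont :: "'a::euclidean_space measure \<Rightarrow> (real \<Rightarrow> 'a \<Rightarrow> 'a) \<Rightarrow> bool" where
  "H_loc_abs_cont \<rho> X \<longleftrightarrow> (\<forall>T\<ge>0. \<forall>\<epsilon>>0. \<exists>\<delta>>0. \<forall>(n::nat) a b.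
     (\<forall>i<n. 0 \<le> a i \<and> a i \<le> b i \<and> b i \<le> T) \<and>
     (\<forall>i<n. \<forall>j<n. i \<noteq> j \<longrightarrow> b i \<le> a j \<or> b j \<le> a i) \<and>
     (\<Sum>i<n. b i - a i) < \<delta> \<longrightarrow>
     (\<Sum>i<n. Hnorm \<rho> (\<lambda>x. X (b i) x - X (a i) x)) < \<epsilon>)"

end

theory Submission
  imports Defs
begin


lemma inH_meas: "inH \<rho> f \<Longrightarrow> f \<in> borel_measurable \<rho>" by (simp add: inH_def)
lemma inH_int: "inH \<rho> f \<Longrightarrow> integrable \<rho> (\<lambda>x. (norm (f x))\<^sup>2)" by (simp add: inH_def)

lemma inH_add[simp]: assumes "inH \<rho> f" "inH \<rho> g" shows "inH \<rho> (\<lambda>x. f x + g x)"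
proof -
  have m: "(\<lambda>x. f x + g x) \<in> borel_measurable \<rho>" using assms by (auto simp: inH_def intro!: borel_measurable_add borel_measurable_scaleR borel_measurable_inner)
  have i1: "integrable \<rho> (\<lambda>x. 2 * (norm (f x))\<^sup>2 + 2 * (norm (g x))\<^sup>2)"
    using assms by (simp add: inH_def)
  have ae: "AE x in \<rho>. norm ((norm (f x + g x))\<^sup>2) \<le> norm (2 * (norm (f x))\<^sup>2 + 2 * (norm (g x))\<^sup>2)"
  proof (intro AE_I2)
    fix x
    have "norm (f x + g x) \<le> norm (f x) + norm (g x)" by (rule norm_triangle_ineq)
    hence "(norm (f x + g x))\<^sup>2 \<le> (norm (f x) + norm (g x))\<^sup>2" by (simp add: power_mono)
    also have "\<dots> \<le> 2 * (norm (f x))\<^sup>2 + 2 * (norm (g x))\<^sup>2"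
      by (smt (verit) sum_squares_bound power2_sum)
    finally show "norm ((norm (f x + g x))\<^sup>2) \<le> norm (2 * (norm (f x))\<^sup>2 + 2 * (norm (g x))\<^sup>2)"
      by simp
  qed
  have m2: "(\<lambda>x. (norm (f x + g x))\<^sup>2) \<in> borel_measurable \<rho>" using m by measurable
  have "integrable \<rho> (\<lambda>x. (norm (f x + g x))\<^sup>2)"
    by (rule Bochner_Integration.integrable_bound[OF i1 m2 ae])
  thus ?thesis using m by (simp add: inH_def)
qed

lemma inH_scale[simp]: assumes "inH \<rho> f" shows "inH \<rho> (\<lambda>x. c *\<^sub>R f x)"
proof -
  have m: "(\<lambda>x. c *\<^sub>R f x) \<in> borel_measurable \<rho>" using assms by (auto simp: inH_def intro!: borel_measurable_add borel_measurable_scaleR borel_measurable_inner)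
  have "integrable \<rho> (\<lambda>x. c\<^sup>2 * (norm (f x))\<^sup>2)" using assms by (simp add: inH_def)
  moreover have "(\<lambda>x. (norm (c *\<^sub>R f x))\<^sup>2) = (\<lambda>x. c\<^sup>2 * (norm (f x))\<^sup>2)"
    by (simp add: power_mult_distrib)
  ultimately show ?thesis using m by (simp add: inH_def)
qed

lemma inH_uminus[simp]: assumes "inH \<rho> f" shows "inH \<rho> (\<lambda>x. - f x)"
  using inH_scale[OF assms, of "-1"] by simp

lemma inH_diff[simp]: assumes "inH \<rho> f" "inH \<rho> g" shows "inH \<rho> (\<lambda>x. f x - g x)"
  using inH_add[OF assms(1) inH_uminus[OF assms(2)]] by simp

lemma inH_zero[simp]: "inH \<rho> (\<lambda>x. 0)" by (simp add: inH_def)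

lemma inH_sum: "finite S \<Longrightarrow> (\<And>i. i \<in> S \<Longrightarrow> inH \<rho> (f i)) \<Longrightarrow> inH \<rho> (\<lambda>x. \<Sum>i\<in>S. f i x)"
  by (induction S rule: finite_induct) auto

lemma integrable_inner[simp]: assumes "inH \<rho> f" "inH \<rho> g" shows "integrable \<rho> (\<lambda>x. f x \<bullet> g x)"
proof -
  have mf: "f \<in> borel_measurable \<rho>" "g \<in> borel_measurable \<rho>" using assms by (auto simp: inH_def)
  have m: "(\<lambda>x. f x \<bullet> g x) \<in> borel_measurable \<rho>" by (rule borel_measurable_inner[OF mf])
  have i1: "integrable \<rho> (\<lambda>x. (norm (f x))\<^sup>2 + (norm (g x))\<^sup>2)"
    using assms unfolding inH_def by (intro Bochner_Integration.integrable_add) auto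
  have ae: "AE x in \<rho>. norm (f x \<bullet> g x) \<le> norm ((norm (f x))\<^sup>2 + (norm (g x))\<^sup>2)"
  proof (intro AE_I2)
    fix x
    have "\<bar>f x \<bullet> g x\<bar> \<le> norm (f x) * norm (g x)" by (rule Cauchy_Schwarz_ineq2)
    also have "\<dots> \<le> (norm (f x))\<^sup>2 + (norm (g x))\<^sup>2"
      using sum_squares_bound[of "norm (f x)" "norm (g x)"] mult_nonneg_nonneg[OF norm_ge_zero[of "f x"] norm_ge_zero[of "g x"]]
      by linarith
    also have "\<dots> = norm ((norm (f x))\<^sup>2 + (norm (g x))\<^sup>2)" by simp
    finally show "norm (f x \<bullet> g x) \<le> norm ((norm (f x))\<^sup>2 + (norm (g x))\<^sup>2)" by simp
  qed
  show ?thesis by (rule Bochner_Integration.integrable_bound[OF i1 m ae])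
qed

lemma Hnorm_Hinner: "Hnorm \<rho> f = sqrt (Hinner \<rho> f f)"
  by (simp add: Hnorm_def Hinner_def power2_norm_eq_inner)

lemma Hinner_self_nonneg: "0 \<le> Hinner \<rho> f f"
  unfolding Hinner_def by (intro integral_nonneg_AE) auto

lemma Hnorm_nonneg[simp]: "0 \<le> Hnorm \<rho> f" by (simp add: Hnorm_def)

lemma Hnorm_sq: "(Hnorm \<rho> f)\<^sup>2 = Hinner \<rho> f f"
  using Hinner_self_nonneg[of \<rho> f] by (simp add: Hnorm_Hinner)

lemma Hinner_commute: "Hinner \<rho> f g = Hinner \<rho> g f"
  by (simp add: Hinner_def inner_commute)

lemma Hinner_add_left[simp]: "inH \<rho> f \<Longrightarrow> inH \<rho> g \<Longrightarrow> inH \<rho> h \<Longrightarrow>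
   Hinner \<rho> (\<lambda>x. f x + g x) h = Hinner \<rho> f h + Hinner \<rho> g h"
  by (simp add: Hinner_def inner_add_left)
lemma Hinner_diff_left[simp]: "inH \<rho> f \<Longrightarrow> inH \<rho> g \<Longrightarrow> inH \<rho> h \<Longrightarrow>
   Hinner \<rho> (\<lambda>x. f x - g x) h = Hinner \<rho> f h - Hinner \<rho> g h"
  by (simp add: Hinner_def inner_diff_left)
lemma Hinner_scale_left[simp]: "Hinner \<rho> (\<lambda>x. c *\<^sub>R f x) h = c * Hinner \<rho> f h"
  by (simp add: Hinner_def)
lemma Hinner_uminus_left[simp]: "Hinner \<rho> (\<lambda>x. - f x) h = - Hinner \<rho> f h"
  using Hinner_scale_left[of \<rho> "-1" f h] by simp
lemma Hinner_add_right[simp]: "inH \<rho> f \<Longrightarrow> inH \<rho> g \<Longrightarrow> inH \<rho> h \<Longrightarrow>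
   Hinner \<rho> h (\<lambda>x. f x + g x) = Hinner \<rho> h f + Hinner \<rho> h g"
  by (simp add: Hinner_def inner_add_right)
lemma Hinner_diff_right[simp]: "inH \<rho> f \<Longrightarrow> inH \<rho> g \<Longrightarrow> inH \<rho> h \<Longrightarrow>
   Hinner \<rho> h (\<lambda>x. f x - g x) = Hinner \<rho> h f - Hinner \<rho> h g"
  by (simp add: Hinner_def inner_diff_right)
lemma Hinner_scale_right[simp]: "Hinner \<rho> h (\<lambda>x. c *\<^sub>R f x) = c * Hinner \<rho> h f"
  by (simp add: Hinner_def)
lemma Hinner_uminus_right[simp]: "Hinner \<rho> h (\<lambda>x. - f x) = - Hinner \<rho> h f"
  using Hinner_scale_right[of \<rho> h "-1" f] by simp

lemma Hnorm_scale: "Hnorm \<rho> (\<lambda>x. c *\<^sub>R f x) = \<bar>c\<bar> * Hnorm \<rho> f"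
  by (simp add: Hnorm_Hinner real_sqrt_mult)

lemma Hnorm_uminus: "Hnorm \<rho> (\<lambda>x. - f x) = Hnorm \<rho> f"
  using Hnorm_scale[of \<rho> "-1" f] by simp

lemma Hnorm_minus_commute: "Hnorm \<rho> (\<lambda>x. f x - g x) = Hnorm \<rho> (\<lambda>x. g x - f x)"
  using Hnorm_uminus[of \<rho> "\<lambda>x. f x - g x"] by simp

lemma quad_nonneg_disc:
  fixes A B C :: real
  assumes "\<And>s. 0 \<le> A - 2 * s * B + s\<^sup>2 * C" "0 \<le> C"
  shows "B\<^sup>2 \<le> A * C"
proof (cases "C = 0")
  case True
  have "B = 0"
  proof (rule ccontr)
    assume "B \<noteq> 0"
    have "0 \<le> A - 2 * ((A + 1) / (2 * B)) * B" using assms(1)[of "(A + 1) / (2 * B)"] True by simp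
    also have "\<dots> = -1" using \<open>B \<noteq> 0\<close> by (simp add: field_simps)
    finally show False by simp
  qed
  thus ?thesis using True by simp
next
  case False
  hence "C > 0" using assms(2) by simp
  have "0 \<le> A - 2 * (B / C) * B + (B / C)\<^sup>2 * C" by (rule assms(1))
  also have "\<dots> = A - B\<^sup>2 / C" using \<open>C > 0\<close> by (simp add: field_simps power2_eq_square)
  finally have "B\<^sup>2 / C \<le> A" by simp
  thus ?thesis using \<open>C > 0\<close> by (simp add: field_simps mult.commute)
qed

lemma Hinner_expand_aux: assumes "inH \<rho> f" "inH \<rho> g"
  shows "Hinner \<rho> (\<lambda>x. f x - s *\<^sub>R g x) (\<lambda>x. f x - s *\<^sub>R g x)
     = Hinner \<rho> f f - 2 * s * Hinner \<rho> f g + s\<^sup>2 * Hinner \<rho> g g"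
proof -
  have sg: "inH \<rho> (\<lambda>x. s *\<^sub>R g x)" using assms(2) by (rule inH_scale)
  have fs: "inH \<rho> (\<lambda>x. f x - s *\<^sub>R g x)" using assms(1) sg by (rule inH_diff)
  have "Hinner \<rho> (\<lambda>x. f x - s *\<^sub>R g x) (\<lambda>x. f x - s *\<^sub>R g x)
      = Hinner \<rho> f (\<lambda>x. f x - s *\<^sub>R g x) - Hinner \<rho> (\<lambda>x. s *\<^sub>R g x) (\<lambda>x. f x - s *\<^sub>R g x)"
    by (rule Hinner_diff_left[OF assms(1) sg fs])
  also have "\<dots> = (Hinner \<rho> f f - s * Hinner \<rho> f g) - s * (Hinner \<rho> g f - s * Hinner \<rho> g g)"
    unfolding Hinner_scale_left Hinner_diff_right[OF assms(1) sg assms(1)] Hinner_diff_right[OF assms(1) sg assms(2)]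
      Hinner_scale_right ..
  also have "\<dots> = Hinner \<rho> f f - 2 * s * Hinner \<rho> f g + s\<^sup>2 * Hinner \<rho> g g"
    by (simp add: Hinner_commute[of \<rho> g f] power2_eq_square algebra_simps)
  finally show ?thesis .
qed

lemma Hinner_CS: assumes "inH \<rho> f" "inH \<rho> g"
  shows "\<bar>Hinner \<rho> f g\<bar> \<le> Hnorm \<rho> f * Hnorm \<rho> g"
proof -
  have q: "\<And>s. 0 \<le> Hinner \<rho> f f - 2 * s * Hinner \<rho> f g + s\<^sup>2 * Hinner \<rho> g g"
    using Hinner_self_nonneg Hinner_expand_aux[OF assms] by metis
  have "(Hinner \<rho> f g)\<^sup>2 \<le> Hinner \<rho> f f * Hinner \<rho> g g"
    by (rule quad_nonneg_disc[OF q Hinner_self_nonneg])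
  hence "(Hinner \<rho> f g)\<^sup>2 \<le> (Hnorm \<rho> f * Hnorm \<rho> g)\<^sup>2"
    by (simp only: power_mult_distrib Hnorm_sq)
  hence "\<bar>Hinner \<rho> f g\<bar>\<^sup>2 \<le> (Hnorm \<rho> f * Hnorm \<rho> g)\<^sup>2" by (simp only: power2_abs)
  thus ?thesis by (rule power2_le_imp_le) (simp add: mult_nonneg_nonneg)
qed

lemma Hnorm_triangle: assumes "inH \<rho> f" "inH \<rho> g"
  shows "Hnorm \<rho> (\<lambda>x. f x + g x) \<le> Hnorm \<rho> f + Hnorm \<rho> g"
proof -
  have "(Hnorm \<rho> (\<lambda>x. f x + g x))\<^sup>2 = Hinner \<rho> f f + 2 * Hinner \<rho> f g + Hinner \<rho> g g"
    using assms by (simp add: Hnorm_sq Hinner_commute[of \<rho> g f])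
  also have "\<dots> \<le> (Hnorm \<rho> f)\<^sup>2 + 2 * (Hnorm \<rho> f * Hnorm \<rho> g) + (Hnorm \<rho> g)\<^sup>2"
    using Hinner_CS[OF assms] by (simp add: Hnorm_sq)
  also have "\<dots> = (Hnorm \<rho> f + Hnorm \<rho> g)\<^sup>2" by (simp add: power2_sum)
  finally show ?thesis by (meson Hnorm_nonneg add_nonneg_nonneg power2_le_imp_le)
qed

lemma Hnorm_tri: assumes "inH \<rho> f" "inH \<rho> g" "\<And>x. h x = f x + g x"
  shows "Hnorm \<rho> h \<le> Hnorm \<rho> f + Hnorm \<rho> g"
proof -
  have "h = (\<lambda>x. f x + g x)" using assms(3) by auto
  thus ?thesis using Hnorm_triangle[OF assms(1,2)] by simp
qed

lemma Hnorm_sum: "finite S \<Longrightarrow> (\<And>i. i \<in> S \<Longrightarrow> inH \<rho> (f i)) \<Longrightarrow>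
   Hnorm \<rho> (\<lambda>x. \<Sum>i\<in>S. f i x) \<le> (\<Sum>i\<in>S. Hnorm \<rho> (f i))"
proof (induction S rule: finite_induct)
  case empty thus ?case by (simp add: Hnorm_def)
next
  case (insert a S)
  have "Hnorm \<rho> (\<lambda>x. \<Sum>i\<in>insert a S. f i x) \<le> Hnorm \<rho> (f a) + Hnorm \<rho> (\<lambda>x. \<Sum>i\<in>S. f i x)"
    using insert by (intro Hnorm_tri) (auto intro!: inH_sum)
  thus ?case using insert by simp
qed

lemma Hnorm_cong: "(\<And>x. f x = g x) \<Longrightarrow> Hnorm \<rho> f = Hnorm \<rho> g"
  by metis

lemma Hnorm_zero_iff_inner: assumes "inH \<rho> f" "inH \<rho> g" "Hnorm \<rho> f = 0"
  shows "Hinner \<rho> f g = 0"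
  using Hinner_CS[OF assms(1,2)] assms(3) by simp




lemma Hnorm_sq_expand: assumes "inH \<rho> a" "inH \<rho> w"
  shows "(Hnorm \<rho> (\<lambda>x. a x - c *\<^sub>R w x))\<^sup>2 = (Hnorm \<rho> a)\<^sup>2 - 2 * c * Hinner \<rho> a w + c\<^sup>2 * (Hnorm \<rho> w)\<^sup>2"
  unfolding Hnorm_sq by (rule Hinner_expand_aux[OF assms])

context
  fixes \<rho> :: "'a::euclidean_space measure" and F :: "('a \<Rightarrow> 'a) \<Rightarrow> real"
    and G :: "('a \<Rightarrow> 'a) \<Rightarrow> ('a \<Rightarrow> 'a)" and lam :: real
  assumes grad: "H_gradient \<rho> F G" and cvx: "H_lambda_convex \<rho> lam F"
begin

lemma grad_at: assumes "inH \<rho> x"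
  shows "inH \<rho> (G x) \<and> (\<forall>\<epsilon>>0. \<exists>\<delta>>0. \<forall>\<eta>. inH \<rho> \<eta> \<and> Hnorm \<rho> (\<lambda>z. \<eta> z - x z) < \<delta> \<longrightarrow>
        \<bar>F \<eta> - F x - Hinner \<rho> (G x) (\<lambda>z. \<eta> z - x z)\<bar> \<le> \<epsilon> * Hnorm \<rho> (\<lambda>z. \<eta> z - x z))"
proof -
  have "\<forall>\<xi>. inH \<rho> \<xi> \<longrightarrow> inH \<rho> (G \<xi>) \<and>
     (\<forall>\<epsilon>>0. \<exists>\<delta>>0. \<forall>\<eta>. inH \<rho> \<eta> \<and> Hnorm \<rho> (\<lambda>x. \<eta> x - \<xi> x) < \<delta> \<longrightarrow>
        \<bar>F \<eta> - F \<xi> - Hinner \<rho> (G \<xi>) (\<lambda>x. \<eta> x - \<xi> x)\<bar> \<le> \<epsilon> * Hnorm \<rho> (\<lambda>x. \<eta> x - \<xi> x))"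
    using grad by (simp only: H_gradient_def)
  from mp[OF spec[OF this, of x] assms] show ?thesis .
qed

lemma G_inH: "inH \<rho> x \<Longrightarrow> inH \<rho> (G x)"
  using grad_at by (rule conjunct1)

lemma frechet: assumes "inH \<rho> x" "e > 0"
  shows "\<exists>\<delta>>0. \<forall>y. inH \<rho> y \<and> Hnorm \<rho> (\<lambda>z. y z - x z) < \<delta> \<longrightarrow>
     \<bar>F y - F x - Hinner \<rho> (G x) (\<lambda>z. y z - x z)\<bar> \<le> e * Hnorm \<rho> (\<lambda>z. y z - x z)"
  using mp[OF spec[OF conjunct2[OF grad_at[OF assms(1)]], of e] assms(2)] .

lemma cvx_at: assumes "inH \<rho> x" "inH \<rho> y" "0 \<le> s" "s \<le> 1"
  shows "F (\<lambda>z. (1 - s) *\<^sub>R x z + s *\<^sub>R y z)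
       \<le> (1 - s) * F x + s * F y - lam / 2 * s * (1 - s) * (Hnorm \<rho> (\<lambda>z. x z - y z))\<^sup>2"
proof -
  have cv: "\<forall>\<xi> \<eta> s. inH \<rho> \<xi> \<and> inH \<rho> \<eta> \<and> 0 \<le> s \<and> s \<le> 1 \<longrightarrow>
     F (\<lambda>x. (1 - s) *\<^sub>R \<xi> x + s *\<^sub>R \<eta> x)
       \<le> (1 - s) * F \<xi> + s * F \<eta> - lam / 2 * s * (1 - s) * (Hnorm \<rho> (\<lambda>x. \<xi> x - \<eta> x))\<^sup>2"
    using cvx by (simp only: H_lambda_convex_def)
  have "inH \<rho> x \<and> inH \<rho> y \<and> 0 \<le> s \<and> s \<le> 1" using assms by blast
  from mp[OF spec[OF spec[OF spec[OF cv, of x], of y], of s] this] show ?thesis .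
qed

lemma subgrad: assumes x: "inH \<rho> x" and y: "inH \<rho> y"
  shows "F x + Hinner \<rho> (G x) (\<lambda>z. y z - x z) + lam / 2 * (Hnorm \<rho> (\<lambda>z. y z - x z))\<^sup>2 \<le> F y"
proof (rule field_le_epsilon)
  fix \<theta> :: real assume th: "0 < \<theta>"
  define d where "d = Hnorm \<rho> (\<lambda>z. y z - x z)"
  define I where "I = Hinner \<rho> (G x) (\<lambda>z. y z - x z)"
  have d0: "0 \<le> d" by (simp add: d_def)
  define e where "e = \<theta> / (2 * (d + 1))"
  have e0: "e > 0" using th d0 by (simp add: e_def)
  obtain \<delta> where dl: "\<delta> > 0" and fr: "\<And>w. inH \<rho> w \<Longrightarrow> Hnorm \<rho> (\<lambda>z. w z - x z) < \<delta> \<Longrightarrow>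
     \<bar>F w - F x - Hinner \<rho> (G x) (\<lambda>z. w z - x z)\<bar> \<le> e * Hnorm \<rho> (\<lambda>z. w z - x z)"
    using frechet[OF x e0] by blast
  define s where "s = min (1/2) (min (\<delta> / (d + 1)) (\<theta> / (\<bar>lam\<bar> * d\<^sup>2 + 1)))"
  have lp: "0 < \<bar>lam\<bar> * d\<^sup>2 + 1" by (simp add: add_nonneg_pos)
  have s0: "0 < s" using dl th d0 lp by (simp add: s_def)
  have s1: "s \<le> 1" by (simp add: s_def)
  have sdl: "s * (d + 1) \<le> \<delta>"
  proof -
    have "s \<le> \<delta> / (d + 1)" by (simp add: s_def)
    thus ?thesis using d0 by (simp add: field_simps)
  qed
  have sth: "s * (\<bar>lam\<bar> * d\<^sup>2 + 1) \<le> \<theta>"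
  proof -
    have "s \<le> \<theta> / (\<bar>lam\<bar> * d\<^sup>2 + 1)" by (simp add: s_def)
    thus ?thesis by (simp add: field_simps add_pos_nonneg)
  qed
  define w where "w = (\<lambda>z. (1 - s) *\<^sub>R x z + s *\<^sub>R y z)"
  have w: "inH \<rho> w" unfolding w_def by (rule inH_add[OF inH_scale[OF x] inH_scale[OF y]])
  have wx: "(\<lambda>z. w z - x z) = (\<lambda>z. s *\<^sub>R (y z - x z))"
    by (rule ext) (simp add: w_def algebra_simps)
  have nwx: "Hnorm \<rho> (\<lambda>z. w z - x z) = s * d"
    using s0 by (simp only: wx Hnorm_scale d_def abs_of_pos)
  have iwx: "Hinner \<rho> (G x) (\<lambda>z. w z - x z) = s * I"
    by (simp only: wx I_def Hinner_scale_right)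
  have "s * d + s = s * (d + 1)" by (simp add: algebra_simps)
  hence "s * d < \<delta>" using sdl s0 by linarith
  hence "\<bar>F w - F x - s * I\<bar> \<le> e * (s * d)" using fr[OF w] nwx iwx by simp
  hence A: "F x + s * I - e * (s * d) \<le> F w" by linarith
  have xy: "Hnorm \<rho> (\<lambda>z. x z - y z) = d" unfolding d_def by (rule Hnorm_minus_commute)
  have C: "F w \<le> (1 - s) * F x + s * F y - lam / 2 * s * (1 - s) * d\<^sup>2"
    using cvx_at[OF x y less_imp_le[OF s0] s1] unfolding w_def xy .
  have eq1: "(1 - s) * F x + s * F y - lam / 2 * s * (1 - s) * d\<^sup>2
     = F x - s * F x + s * F y - lam / 2 * (s * d\<^sup>2) + lam / 2 * (s * (s * d\<^sup>2))"
    by (simp add: field_simps)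
  have eq2: "s * (F x + I + lam / 2 * d\<^sup>2) = s * F x + s * I + lam / 2 * (s * d\<^sup>2)"
    by (simp add: field_simps)
  have eq3: "s * (F y + e * d + lam / 2 * s * d\<^sup>2) = s * F y + e * (s * d) + lam / 2 * (s * (s * d\<^sup>2))"
    by (simp add: field_simps)
  have "s * (F x + I + lam / 2 * d\<^sup>2) \<le> s * (F y + e * d + lam / 2 * s * d\<^sup>2)"
    unfolding eq2 eq3 using A C eq1 by linarith
  hence B: "F x + I + lam / 2 * d\<^sup>2 \<le> F y + e * d + lam / 2 * s * d\<^sup>2"
    using s0 by simp
  have "e * d \<le> \<theta> / 2"
  proof -
    have "e * d = \<theta> / 2 * (d / (d + 1))" using d0 by (simp add: e_def field_simps)
    also have "\<dots> \<le> \<theta> / 2 * 1" using th d0 by (intro mult_left_mono) auto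
    finally show ?thesis by simp
  qed
  moreover have "lam / 2 * s * d\<^sup>2 \<le> \<theta> / 2"
  proof -
    have "lam * (s * d\<^sup>2) \<le> \<bar>lam\<bar> * (s * d\<^sup>2)"
      using s0 by (intro mult_right_mono) auto
    moreover have "\<bar>lam\<bar> * (s * d\<^sup>2) \<le> \<theta>" using sth s0 by (simp add: algebra_simps)
    ultimately have "lam * (s * d\<^sup>2) \<le> \<theta>" by linarith
    thus ?thesis by (simp add: algebra_simps)
  qed
  ultimately show "F x + Hinner \<rho> (G x) (\<lambda>z. y z - x z) + lam / 2 * (Hnorm \<rho> (\<lambda>z. y z - x z))\<^sup>2 \<le> F y + \<theta>"
    using B unfolding I_def[symmetric] d_def[symmetric] by linarith
qed

lemma G_cont: assumes x: "inH \<rho> x" and ep: "\<epsilon> > 0"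
  shows "\<exists>\<delta>>0. \<forall>y. inH \<rho> y \<and> Hnorm \<rho> (\<lambda>z. y z - x z) < \<delta> \<longrightarrow> Hnorm \<rho> (\<lambda>z. G y z - G x z) < \<epsilon>"
proof -
  define \<eta> where "\<eta> = \<epsilon> / 4"
  have e0: "\<eta> > 0" using ep by (simp add: \<eta>_def)
  obtain \<delta>\<eta> where dl: "\<delta>\<eta> > 0" and fr: "\<And>w. inH \<rho> w \<Longrightarrow> Hnorm \<rho> (\<lambda>z. w z - x z) < \<delta>\<eta> \<Longrightarrow>
     \<bar>F w - F x - Hinner \<rho> (G x) (\<lambda>z. w z - x z)\<bar> \<le> \<eta> * Hnorm \<rho> (\<lambda>z. w z - x z)"
    using frechet[OF x e0] by blast
  define r where "r = min (\<delta>\<eta> / 2) (\<epsilon> / (10 * \<bar>lam\<bar> + 1))"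
  have lp: "0 < 10 * \<bar>lam\<bar> + 1" by (simp add: add_nonneg_pos)
  have r0: "r > 0" using dl ep lp by (simp add: r_def)
  have rd: "r < \<delta>\<eta>" using dl by (simp add: r_def)
  have rl: "\<bar>lam\<bar> * r \<le> \<epsilon> / 10"
  proof -
    have "r \<le> \<epsilon> / (10 * \<bar>lam\<bar> + 1)" by (simp add: r_def)
    hence "r * (10 * \<bar>lam\<bar> + 1) \<le> \<epsilon>" using lp by (simp add: field_simps)
    thus ?thesis using r0 by (simp add: algebra_simps)
  qed
  show ?thesis
  proof (intro exI[of _ "r / 2"] conjI allI impI)
    show "r / 2 > 0" using r0 by simp
    fix y assume "inH \<rho> y \<and> Hnorm \<rho> (\<lambda>z. y z - x z) < r / 2"
    hence y: "inH \<rho> y" and ey: "Hnorm \<rho> (\<lambda>z. y z - x z) < r / 2" by auto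
    define e where "e = Hnorm \<rho> (\<lambda>z. y z - x z)"
    have e0': "0 \<le> e" by (simp add: e_def)
    define d where "d = (\<lambda>z. G y z - G x z)"
    define D where "D = Hnorm \<rho> d"
    have Gx: "inH \<rho> (G x)" using G_inH x by blast
    have Gy: "inH \<rho> (G y)" using G_inH y by blast
    have dH: "inH \<rho> d" using Gx Gy by (simp add: d_def)
    show "Hnorm \<rho> (\<lambda>z. G y z - G x z) < \<epsilon>"
    proof (cases "D = 0")
      case True thus ?thesis using ep by (simp add: D_def d_def)
    next
      case False
      hence D0: "D > 0" by (simp add: D_def less_le)
      define u where "u = (\<lambda>z. (1 / D) *\<^sub>R d z)"
      have uH: "inH \<rho> u" using dH by (simp add: u_def)
      have nu: "Hnorm \<rho> u = 1" using D0 by (simp add: u_def Hnorm_scale D_def[symmetric])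
      define z0 where "z0 = (\<lambda>w. x w + r *\<^sub>R u w)"
      have z0H: "inH \<rho> z0" using x uH by (simp add: z0_def)
      have z0x: "(\<lambda>w. z0 w - x w) = (\<lambda>w. r *\<^sub>R u w)" by (simp add: z0_def)
      have nz0x: "Hnorm \<rho> (\<lambda>w. z0 w - x w) = r" using r0 by (simp add: z0x Hnorm_scale nu)
      have "\<bar>F z0 - F x - Hinner \<rho> (G x) (\<lambda>w. z0 w - x w)\<bar> \<le> \<eta> * r"
        using fr[OF z0H] nz0x rd by simp
      hence "\<bar>F z0 - F x - r * Hinner \<rho> (G x) u\<bar> \<le> \<eta> * r" by (simp only: z0x Hinner_scale_right)
      hence A: "F z0 \<le> F x + r * Hinner \<rho> (G x) u + \<eta> * r" by linarith
      have B: "F y + Hinner \<rho> (G y) (\<lambda>w. z0 w - y w) + lam / 2 * (Hnorm \<rho> (\<lambda>w. z0 w - y w))\<^sup>2 \<le> F z0"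
        by (rule subgrad[OF y z0H])
      have C: "F x + Hinner \<rho> (G x) (\<lambda>w. y w - x w) + lam / 2 * e\<^sup>2 \<le> F y"
        using subgrad[OF x y] by (simp add: e_def)
      define N where "N = Hnorm \<rho> (\<lambda>w. z0 w - y w)"
      have N0: "0 \<le> N" by (simp add: N_def)
      have "N \<le> Hnorm \<rho> (\<lambda>w. x w - y w) + Hnorm \<rho> (\<lambda>w. r *\<^sub>R u w)"
        unfolding N_def by (rule Hnorm_tri[OF inH_diff[OF x y] inH_scale[OF uH]]) (simp add: z0_def algebra_simps)
      moreover have "Hnorm \<rho> (\<lambda>w. x w - y w) = e" unfolding e_def by (rule Hnorm_minus_commute)
      ultimately have NB: "N \<le> e + r" using r0 by (simp add: Hnorm_scale nu)
      have i1: "Hinner \<rho> (G y) (\<lambda>w. z0 w - y w) = Hinner \<rho> (G y) x - Hinner \<rho> (G y) y + r * Hinner \<rho> (G y) u"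
      proof -
        have "(\<lambda>w. z0 w - y w) = (\<lambda>w. (x w - y w) + r *\<^sub>R u w)" by (rule ext) (simp add: z0_def algebra_simps)
        hence "Hinner \<rho> (G y) (\<lambda>w. z0 w - y w) = Hinner \<rho> (G y) (\<lambda>w. x w - y w) + Hinner \<rho> (G y) (\<lambda>w. r *\<^sub>R u w)"
          using Hinner_add_right[OF inH_diff[OF x y] inH_scale[OF uH] Gy] by simp
        thus ?thesis using Hinner_diff_right[OF x y Gy] Hinner_scale_right by simp
      qed
      have i2: "Hinner \<rho> (G y) u - Hinner \<rho> (G x) u = D"
      proof -
        have "Hinner \<rho> (G y) u - Hinner \<rho> (G x) u = Hinner \<rho> d u"
          unfolding d_def by (rule Hinner_diff_left[OF Gy Gx uH, symmetric])
        also have "\<dots> = (1 / D) * Hinner \<rho> d d" unfolding u_def by (rule Hinner_scale_right)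
        also have "\<dots> = D" using D0 by (simp add: Hnorm_sq[symmetric] D_def power2_eq_square)
        finally show ?thesis .
      qed
      have i3: "Hinner \<rho> (G y) y - Hinner \<rho> (G y) x - (Hinner \<rho> (G x) y - Hinner \<rho> (G x) x) \<le> D * e"
      proof -
        have "Hinner \<rho> (G y) y - Hinner \<rho> (G y) x - (Hinner \<rho> (G x) y - Hinner \<rho> (G x) x)
            = Hinner \<rho> d (\<lambda>w. y w - x w)"
          unfolding d_def Hinner_diff_left[OF Gy Gx inH_diff[OF y x]] Hinner_diff_right[OF y x Gy] Hinner_diff_right[OF y x Gx] ..
        also have "\<dots> \<le> D * e" using Hinner_CS[OF dH, of "\<lambda>w. y w - x w"] x y
          by (simp add: D_def e_def)
        finally show ?thesis .
      qed
      have i4: "Hinner \<rho> (G x) (\<lambda>w. y w - x w) = Hinner \<rho> (G x) y - Hinner \<rho> (G x) x"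
        by (rule Hinner_diff_right[OF y x Gx])
      have lamN: "- (\<bar>lam\<bar> * (e\<^sup>2 + N\<^sup>2)) \<le> lam * (e\<^sup>2 + N\<^sup>2)"
      proof -
        have "(- \<bar>lam\<bar>) * (e\<^sup>2 + N\<^sup>2) \<le> lam * (e\<^sup>2 + N\<^sup>2)" by (rule mult_right_mono) auto
        thus ?thesis by simp
      qed
      have rD: "r * D = r * Hinner \<rho> (G y) u - r * Hinner \<rho> (G x) u" using i2 by (simp add: algebra_simps)
      have B': "F y + (Hinner \<rho> (G y) x - Hinner \<rho> (G y) y + r * Hinner \<rho> (G y) u) + lam / 2 * N\<^sup>2 \<le> F z0"
        using B unfolding i1 N_def[symmetric] .
      have C': "F x + (Hinner \<rho> (G x) y - Hinner \<rho> (G x) x) + lam / 2 * e\<^sup>2 \<le> F y"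
        using C unfolding i4 .
      have key: "r * D \<le> \<eta> * r + D * e + \<bar>lam\<bar> / 2 * (e\<^sup>2 + N\<^sup>2)"
        using A B' C' i3 rD lamN by (simp add: field_simps)
      have "e \<le> r / 2" using ey by (simp add: e_def)
      have De: "D * e \<le> D * (r / 2)" using D0 \<open>e \<le> r / 2\<close> by (intro mult_left_mono) auto
      have e2: "e\<^sup>2 \<le> (r / 2)\<^sup>2" using \<open>e \<le> r / 2\<close> e0' by (intro power_mono) auto
      have N2: "N\<^sup>2 \<le> (3 * r / 2)\<^sup>2" using NB \<open>e \<le> r / 2\<close> N0 by (intro power_mono) auto
      have L: "\<bar>lam\<bar> / 2 * (e\<^sup>2 + N\<^sup>2) \<le> \<bar>lam\<bar> / 2 * ((r / 2)\<^sup>2 + (3 * r / 2)\<^sup>2)"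
        using e2 N2 by (intro mult_left_mono) auto
      have eq1: "\<bar>lam\<bar> / 2 * ((r / 2)\<^sup>2 + (3 * r / 2)\<^sup>2) = r * (5 / 4 * (\<bar>lam\<bar> * r))"
        by (simp add: power2_eq_square field_simps)
      have eq2: "r * (\<eta> + 5 / 4 * (\<bar>lam\<bar> * r)) = \<eta> * r + r * (5 / 4 * (\<bar>lam\<bar> * r))"
        by (simp add: algebra_simps)
      have eq3: "r * D = r * (D / 2) + D * (r / 2)" by simp
      have "r * (D / 2) \<le> r * (\<eta> + 5 / 4 * (\<bar>lam\<bar> * r))"
        using key De L eq1 eq2 eq3 by linarith
      hence "D / 2 \<le> \<eta> + 5 / 4 * (\<bar>lam\<bar> * r)" using r0 by (simp only: mult_le_cancel_left_pos)
      hence "D \<le> 2 * \<eta> + 5 / 2 * (\<bar>lam\<bar> * r)" by linarith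
      also have "\<dots> \<le> \<epsilon> / 2 + \<epsilon> / 4" using rl by (simp add: \<eta>_def mult.commute)
      also have "\<dots> < \<epsilon>" using ep by simp
      finally show ?thesis by (simp add: D_def d_def)
    qed
  qed
qed

lemma euler_lagrange: assumes tau: "\<tau> > 0" and Z: "inH \<rho> Z" and Y: "inH \<rho> Y"
    and mini: "\<And>\<xi>. inH \<rho> \<xi> \<Longrightarrow> scheme_fun \<rho> F G \<tau> Z Y \<le> scheme_fun \<rho> F G \<tau> Z \<xi>"
  shows "Hnorm \<rho> (\<lambda>x. Y x - Z x + (\<tau> / 2) *\<^sub>R (G Y x + G Z x)) = 0"
proof -
  have GY: "inH \<rho> (G Y)" using G_inH Y by blast
  have GZ: "inH \<rho> (G Z)" using G_inH Z by blast
  define W where "W = (\<lambda>x. G Y x + G Z x + (2 / \<tau>) *\<^sub>R (Y x - Z x))"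
  have YZ: "inH \<rho> (\<lambda>x. Y x - Z x)" by (rule inH_diff[OF Y Z])
  have WH: "inH \<rho> W" unfolding W_def by (rule inH_add[OF inH_add[OF GY GZ] inH_scale[OF YZ]])
  define N where "N = Hnorm \<rho> W"
  define P where "P = Hinner \<rho> (G Y) W"
  define Q where "Q = Hinner \<rho> (G Z) W"
  define RT where "RT = (Hinner \<rho> Y W - Hinner \<rho> Z W) / \<tau>"
  have WW: "N\<^sup>2 = P + Q + 2 * RT"
  proof -
    have "N\<^sup>2 = Hinner \<rho> W W" by (simp add: N_def Hnorm_sq)
    also have "\<dots> = Hinner \<rho> (\<lambda>x. G Y x + G Z x + (2 / \<tau>) *\<^sub>R (Y x - Z x)) W"
      by (simp only: W_def)
    also have "\<dots> = Hinner \<rho> (\<lambda>x. G Y x + G Z x) W + Hinner \<rho> (\<lambda>x. (2 / \<tau>) *\<^sub>R (Y x - Z x)) W"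
      by (rule Hinner_add_left[OF inH_add[OF GY GZ] inH_scale[OF YZ] WH])
    also have "\<dots> = P + Q + (2 / \<tau>) * (Hinner \<rho> Y W - Hinner \<rho> Z W)"
      unfolding Hinner_add_left[OF GY GZ WH] Hinner_scale_left Hinner_diff_left[OF Y Z WH] P_def Q_def ..
    also have "\<dots> = P + Q + 2 * RT" by (simp add: RT_def)
    finally show ?thesis .
  qed
  have "N = 0"
  proof (rule ccontr)
    assume "N \<noteq> 0"
    hence N0: "N > 0" using Hnorm_nonneg[of \<rho> W] unfolding N_def by linarith
    define e where "e = N / 4"
    have e0: "e > 0" using N0 by (simp add: e_def)
    obtain \<delta> where dl: "\<delta> > 0" and fr: "\<And>w. inH \<rho> w \<Longrightarrow> Hnorm \<rho> (\<lambda>z. w z - Y z) < \<delta> \<Longrightarrow>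
       \<bar>F w - F Y - Hinner \<rho> (G Y) (\<lambda>z. w z - Y z)\<bar> \<le> e * Hnorm \<rho> (\<lambda>z. w z - Y z)"
      using frechet[OF Y e0] by blast
    define s where "s = min (\<tau> / 4) (\<delta> / (2 * N))"
    have s0: "s > 0" using tau dl N0 by (simp add: s_def)
    have st: "s \<le> \<tau> / 4" by (simp add: s_def)
    have sN: "s * N < \<delta>"
    proof -
      have "s \<le> \<delta> / (2 * N)" by (simp add: s_def)
      hence "s * N \<le> \<delta> / 2" using N0 by (simp add: field_simps)
      thus ?thesis using dl by linarith
    qed
    define \<xi> where "\<xi> = (\<lambda>x. Y x - s *\<^sub>R W x)"
    have \<xi>H: "inH \<rho> \<xi>" unfolding \<xi>_def by (rule inH_diff[OF Y inH_scale[OF WH]])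
    have \<xi>Y: "(\<lambda>x. \<xi> x - Y x) = (\<lambda>x. (- s) *\<^sub>R W x)" by (rule ext) (simp add: \<xi>_def)
    have n\<xi>Y: "Hnorm \<rho> (\<lambda>x. \<xi> x - Y x) = s * N"
      using s0 by (simp only: \<xi>Y Hnorm_scale N_def abs_minus_cancel abs_of_pos)
    have i\<xi>Y: "Hinner \<rho> (G Y) (\<lambda>x. \<xi> x - Y x) = - (s * P)"
      by (simp only: \<xi>Y Hinner_scale_right P_def)
    have "\<bar>F \<xi> - F Y - (- (s * P))\<bar> \<le> e * (s * N)"
      using fr[OF \<xi>H] n\<xi>Y i\<xi>Y sN by simp
    hence Fr: "F \<xi> - F Y \<le> - (s * P) + e * (s * N)" by linarith
    have m: "scheme_fun \<rho> F G \<tau> Z Y \<le> scheme_fun \<rho> F G \<tau> Z \<xi>" by (rule mini[OF \<xi>H])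
    define A where "A = (Hnorm \<rho> (\<lambda>x. Y x - Z x))\<^sup>2"
    have h1: "Hinner \<rho> (G Z) \<xi> = Hinner \<rho> (G Z) Y - s * Q"
      unfolding \<xi>_def Hinner_diff_right[OF Y inH_scale[OF WH] GZ] Hinner_scale_right Q_def ..
    have \<xi>Z: "(\<lambda>x. \<xi> x - Z x) = (\<lambda>x. (Y x - Z x) - s *\<^sub>R W x)" by (rule ext) (simp add: \<xi>_def algebra_simps)
    have h2: "(Hnorm \<rho> (\<lambda>x. \<xi> x - Z x))\<^sup>2 = A - 2 * s * (Hinner \<rho> Y W - Hinner \<rho> Z W) + s\<^sup>2 * N\<^sup>2"
      unfolding \<xi>Z Hnorm_sq_expand[OF YZ WH] Hinner_diff_left[OF Y Z WH] A_def N_def ..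
    have h2': "(Hnorm \<rho> (\<lambda>x. \<xi> x - Z x))\<^sup>2 / (2 * \<tau>) = A / (2 * \<tau>) - s * RT + (s * N\<^sup>2) * (s / \<tau>) / 2"
      unfolding h2 RT_def using tau by (simp add: field_simps power2_eq_square)
    have M: "F Y / 2 + Hinner \<rho> (G Z) Y / 2 + A / (2 * \<tau>) \<le>
        F \<xi> / 2 + (Hinner \<rho> (G Z) Y - s * Q) / 2 + (A / (2 * \<tau>) - s * RT + (s * N\<^sup>2) * (s / \<tau>) / 2)"
      using m unfolding scheme_fun_def h1 h2' A_def[symmetric] .
    have sNN: "s * N\<^sup>2 = s * P + s * Q + 2 * (s * RT)" unfolding WW by (simp add: algebra_simps)
    have K: "(s * N\<^sup>2) * (s / \<tau>) \<le> (s * N\<^sup>2) * (1 / 4)"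
      using st tau s0 N0 by (intro mult_left_mono) (auto simp: field_simps)
    have eN: "e * (s * N) = (s * N\<^sup>2) / 4" by (simp add: e_def power2_eq_square)
    have pos: "0 < s * N\<^sup>2" using s0 N0 by simp
    define SN where "SN = s * N\<^sup>2"
    define KK where "KK = s * N\<^sup>2 * (s / \<tau>)"
    define SP where "SP = s * P"
    define SQ where "SQ = s * Q"
    define SR where "SR = s * RT"
    define ESN where "ESN = e * (s * N)"
    have M': "F Y / 2 + Hinner \<rho> (G Z) Y / 2 + A / (2 * \<tau>) \<le>
        F \<xi> / 2 + (Hinner \<rho> (G Z) Y - SQ) / 2 + (A / (2 * \<tau>) - SR + KK / 2)"
      using M unfolding SQ_def SR_def KK_def .
    define AT where "AT = A / (2 * \<tau>)"
    define HZ where "HZ = Hinner \<rho> (G Z) Y"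
    have M'': "F Y / 2 + HZ / 2 + AT \<le> F \<xi> / 2 + (HZ - SQ) / 2 + (AT - SR + KK / 2)"
      using M' unfolding AT_def[symmetric] HZ_def[symmetric] .
    have Fr': "F \<xi> - F Y \<le> - SP + ESN" using Fr unfolding SP_def ESN_def .
    have sNN': "SN = SP + SQ + 2 * SR" using sNN unfolding SN_def SP_def SQ_def SR_def .
    have K': "KK \<le> SN * (1 / 4)" using K unfolding KK_def SN_def .
    have eN': "ESN = SN / 4" using eN unfolding ESN_def SN_def .
    have pos': "0 < SN" using pos unfolding SN_def .
    show False using M'' Fr' sNN' K' eN' pos' by argo
  qed
  hence "Hnorm \<rho> W = 0" by (simp add: N_def)
  moreover have "(\<lambda>x. Y x - Z x + (\<tau> / 2) *\<^sub>R (G Y x + G Z x)) = (\<lambda>x. (\<tau> / 2) *\<^sub>R W x)"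
    using tau by (intro ext) (simp add: W_def algebra_simps)
  ultimately show ?thesis by (simp add: Hnorm_scale)
qed

end



lemma Hnorm_zero_fun[simp]: "Hnorm \<rho> (\<lambda>x. 0) = 0" by (simp add: Hnorm_def)

lemma disc_est:
  fixes \<rho> :: "'a::euclidean_space measure" and Y :: "nat \<Rightarrow> 'a \<Rightarrow> 'a" and G :: "('a \<Rightarrow> 'a) \<Rightarrow> ('a \<Rightarrow> 'a)"
  assumes YH: "\<And>n. inH \<rho> (Y n)" and GH: "\<And>n. inH \<rho> (G (Y n))" and gH: "inH \<rho> g" and tau: "\<tau> > 0"
    and E0: "\<And>n. Hnorm \<rho> (\<lambda>x. Y (Suc n) x - Y n x + (\<tau> / 2) *\<^sub>R (G (Y (Suc n)) x + G (Y n) x)) = 0"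
    and bnd: "\<And>j. m \<le> j \<Longrightarrow> j \<le> m + K \<Longrightarrow> Hnorm \<rho> (\<lambda>x. G (Y j) x - g x) \<le> c"
  shows "k \<le> K \<Longrightarrow> Hnorm \<rho> (\<lambda>x. Y (m + k) x - Y m x + (real k * \<tau>) *\<^sub>R g x) \<le> real k * \<tau> * c"
proof (induction k)
  case 0 thus ?case by simp
next
  case (Suc k)
  define S where "S = (\<lambda>x. Y (m + k) x - Y m x + (real k * \<tau>) *\<^sub>R g x)"
  define E where "E = (\<lambda>x. Y (Suc (m + k)) x - Y (m + k) x + (\<tau> / 2) *\<^sub>R (G (Y (Suc (m + k))) x + G (Y (m + k)) x))"
  define R where "R = (\<lambda>x. - ((\<tau> / 2) *\<^sub>R ((G (Y (Suc (m + k))) x - g x) + (G (Y (m + k)) x - g x))))"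
  have SH: "inH \<rho> S" unfolding S_def by (rule inH_add[OF inH_diff[OF YH YH] inH_scale[OF gH]])
  have EH: "inH \<rho> E" unfolding E_def by (rule inH_add[OF inH_diff[OF YH YH] inH_scale[OF inH_add[OF GH GH]]])
  have A1: "inH \<rho> (\<lambda>x. G (Y (Suc (m + k))) x - g x)" by (rule inH_diff[OF GH gH])
  have A2: "inH \<rho> (\<lambda>x. G (Y (m + k)) x - g x)" by (rule inH_diff[OF GH gH])
  have RH: "inH \<rho> R" unfolding R_def by (rule inH_uminus[OF inH_scale[OF inH_add[OF A1 A2]]])
  have SE: "inH \<rho> (\<lambda>x. S x + E x)" by (rule inH_add[OF SH EH])
  have eq: "\<And>x. Y (m + Suc k) x - Y m x + (real (Suc k) * \<tau>) *\<^sub>R g x = (S x + E x) + R x"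
    by (simp add: S_def E_def R_def algebra_simps) (simp add: scaleR_add_left[symmetric])
  have "Hnorm \<rho> (\<lambda>x. Y (m + Suc k) x - Y m x + (real (Suc k) * \<tau>) *\<^sub>R g x)
      \<le> Hnorm \<rho> (\<lambda>x. S x + E x) + Hnorm \<rho> R"
    by (rule Hnorm_tri[OF SE RH eq])
  also have "Hnorm \<rho> (\<lambda>x. S x + E x) \<le> Hnorm \<rho> S + Hnorm \<rho> E" by (rule Hnorm_triangle[OF SH EH])
  also have "Hnorm \<rho> E = 0" unfolding E_def by (rule E0)
  also have "Hnorm \<rho> S \<le> real k * \<tau> * c" unfolding S_def using Suc by simp
  also have "Hnorm \<rho> R \<le> \<tau> / 2 * (c + c)"
  proof -
    have "Hnorm \<rho> R = \<tau> / 2 * Hnorm \<rho> (\<lambda>x. (G (Y (Suc (m + k))) x - g x) + (G (Y (m + k)) x - g x))"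
      unfolding R_def Hnorm_uminus Hnorm_scale using tau by simp
    also have "\<dots> \<le> \<tau> / 2 * (Hnorm \<rho> (\<lambda>x. G (Y (Suc (m + k))) x - g x) + Hnorm \<rho> (\<lambda>x. G (Y (m + k)) x - g x))"
      using tau by (intro mult_left_mono Hnorm_triangle[OF A1 A2]) auto
    also have "\<dots> \<le> \<tau> / 2 * (c + c)"
      using tau Suc.prems by (intro mult_left_mono add_mono bnd) auto
    finally show ?thesis .
  qed
  finally show ?case by (simp add: algebra_simps)
qed

lemma floor_facts:
  assumes a0: "0 \<le> a" and tp: "\<tau> > 0"
  shows "real (nat \<lfloor>a / \<tau>\<rfloor>) * \<tau> \<le> a" "a < real (nat \<lfloor>a / \<tau>\<rfloor>) * \<tau> + \<tau>"
proof -
  have f0: "0 \<le> \<lfloor>a / \<tau>\<rfloor>" using a0 tp by simp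
  hence r: "real (nat \<lfloor>a / \<tau>\<rfloor>) = of_int \<lfloor>a / \<tau>\<rfloor>" by simp
  have "of_int \<lfloor>a / \<tau>\<rfloor> \<le> a / \<tau>" by (rule of_int_floor_le)
  thus "real (nat \<lfloor>a / \<tau>\<rfloor>) * \<tau> \<le> a" using tp unfolding r by (simp only: pos_le_divide_eq)
  have "a / \<tau> < of_int \<lfloor>a / \<tau>\<rfloor> + 1" by (rule real_of_int_floor_add_one_gt)
  hence "a < (of_int \<lfloor>a / \<tau>\<rfloor> + 1) * \<tau>" using tp by (simp only: pos_divide_less_eq)
  thus "a < real (nat \<lfloor>a / \<tau>\<rfloor>) * \<tau> + \<tau>" unfolding r by (simp add: algebra_simps)
qed

lemma interp_grid: "\<tau> > 0 \<Longrightarrow> interp \<tau> X (real j * \<tau>) = X j"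
  by (simp add: interp_def)

lemma deriv_est:
  fixes \<rho> :: "'a::euclidean_space measure" and G :: "('a \<Rightarrow> 'a) \<Rightarrow> ('a \<Rightarrow> 'a)"
    and \<tau> :: "nat \<Rightarrow> real" and Xs :: "nat \<Rightarrow> nat \<Rightarrow> 'a \<Rightarrow> 'a" and X :: "real \<Rightarrow> 'a \<Rightarrow> 'a"
  assumes tau_pos: "\<And>k. \<tau> k > 0" and tau_lim: "\<tau> \<longlonglongrightarrow> 0"
    and XsH: "\<And>k n. inH \<rho> (Xs k n)" and GH: "\<And>\<xi>. inH \<rho> \<xi> \<Longrightarrow> inH \<rho> (G \<xi>)"
    and E0: "\<And>k n. Hnorm \<rho> (\<lambda>x. Xs k (Suc n) x - Xs k n x + (\<tau> k / 2) *\<^sub>R (G (Xs k (Suc n)) x + G (Xs k n) x)) = 0"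
    and X_in: "\<And>t. t \<ge> 0 \<Longrightarrow> inH \<rho> (X t)"
    and conv: "\<And>T \<epsilon>. T \<ge> 0 \<Longrightarrow> \<epsilon> > 0 \<Longrightarrow> \<exists>K. \<forall>k\<ge>K. \<forall>t\<in>{0..T}.
                  Hnorm \<rho> (\<lambda>x. interp (\<tau> k) (Xs k) t x - X t x) < \<epsilon>"
    and X_lip: "\<And>T. T \<ge> 0 \<Longrightarrow> \<exists>L. \<forall>s\<in>{0..T}. \<forall>t\<in>{0..T}.
                  Hnorm \<rho> (\<lambda>x. X s x - X t x) \<le> L * \<bar>s - t\<bar>"
    and t0: "t > 0" and ep: "\<epsilon> > 0" and d1: "\<delta>1 > 0"
    and Gc: "\<And>y. inH \<rho> y \<Longrightarrow> Hnorm \<rho> (\<lambda>z. y z - X t z) < \<delta>1 \<Longrightarrow> Hnorm \<rho> (\<lambda>z. G y z - G (X t) z) < \<epsilon>"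
  shows "\<exists>h0>0. \<forall>a b. t - h0 \<le> a \<longrightarrow> a \<le> b \<longrightarrow> b \<le> t + h0 \<longrightarrow>
           Hnorm \<rho> (\<lambda>x. X b x - X a x + (b - a) *\<^sub>R G (X t) x) \<le> (b - a) * \<epsilon>"
proof -
  define \<xi> where "\<xi> = X t"
  have \<xi>H: "inH \<rho> \<xi>" unfolding \<xi>_def using X_in t0 by simp
  define g where "g = G \<xi>"
  have gH: "inH \<rho> g" unfolding g_def by (rule GH[OF \<xi>H])
  define C where "C = Hnorm \<rho> g"
  have C0: "0 \<le> C" by (simp add: C_def)
  define T where "T = t + 1"
  have T0: "T \<ge> 0" using t0 by (simp add: T_def)
  obtain L where L: "\<forall>s\<in>{0..T}. \<forall>t\<in>{0..T}. Hnorm \<rho> (\<lambda>x. X s x - X t x) \<le> L * \<bar>s - t\<bar>"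
    using X_lip[OF T0] by blast
  define L' where "L' = \<bar>L\<bar>"
  have L'0: "0 \<le> L'" by (simp add: L'_def)
  have Lip: "\<And>s s'. s \<in> {0..T} \<Longrightarrow> s' \<in> {0..T} \<Longrightarrow> Hnorm \<rho> (\<lambda>x. X s x - X s' x) \<le> L' * \<bar>s - s'\<bar>"
  proof -
    fix s s' assume "s \<in> {0..T}" "s' \<in> {0..T}"
    hence "Hnorm \<rho> (\<lambda>x. X s x - X s' x) \<le> L * \<bar>s - s'\<bar>" using L by blast
    also have "\<dots> \<le> L' * \<bar>s - s'\<bar>" unfolding L'_def by (intro mult_right_mono) auto
    finally show "Hnorm \<rho> (\<lambda>x. X s x - X s' x) \<le> L' * \<bar>s - s'\<bar>" .
  qed
  define h0 where "h0 = min (t / 2) (min (1 / 2) (\<delta>1 / (3 * (L' + 1))))"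
  have h00: "h0 > 0" using t0 d1 L'0 by (simp add: h0_def)
  have h0t: "h0 \<le> t / 2" unfolding h0_def by (rule min.cobounded1)
  have h01: "h0 \<le> 1 / 2" unfolding h0_def by (rule order_trans[OF min.cobounded2 min.cobounded1])
  have h0L: "3 * (L' * h0) < \<delta>1"
  proof -
    have "h0 \<le> \<delta>1 / (3 * (L' + 1))" by (simp add: h0_def)
    hence "h0 * (3 * (L' + 1)) \<le> \<delta>1" using L'0 by (simp add: field_simps)
    thus ?thesis using h00 by (simp add: algebra_simps)
  qed
  show ?thesis
  proof (intro exI[of _ h0] conjI allI impI)
    show "h0 > 0" by (rule h00)
    fix a b assume ha: "t - h0 \<le> a" and hab: "a \<le> b" and hb: "b \<le> t + h0"
    have a0: "0 \<le> a" using ha h0t t0 by linarith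
    have bT: "b \<le> T" using hb h01 by (simp add: T_def)
    have aT: "a \<in> {0..T}" and bT': "b \<in> {0..T}" using a0 hab bT by auto
    show "Hnorm \<rho> (\<lambda>x. X b x - X a x + (b - a) *\<^sub>R G (X t) x) \<le> (b - a) * \<epsilon>"
      unfolding \<xi>_def[symmetric] g_def[symmetric]
    proof (rule field_le_epsilon)
      fix \<theta> :: real assume th: "\<theta> > 0"
      define \<beta> where "\<beta> = min (\<delta>1 / 3) (\<theta> / 4)"
      have \<beta>0: "\<beta> > 0" using d1 th by (simp add: \<beta>_def)
      obtain K1 where K1: "\<And>k t. k \<ge> K1 \<Longrightarrow> t \<in> {0..T} \<Longrightarrow> Hnorm \<rho> (\<lambda>x. interp (\<tau> k) (Xs k) t x - X t x) < \<beta>"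
        using conv[OF T0 \<beta>0] by blast
      define \<gamma> where "\<gamma> = min h0 (\<theta> / (2 * (\<epsilon> + C + 1)))"
      have \<gamma>0: "\<gamma> > 0" using h00 th ep C0 by (simp add: \<gamma>_def)
      have "eventually (\<lambda>k. \<tau> k < \<gamma>) sequentially" by (rule order_tendstoD(2)[OF tau_lim \<gamma>0])
      then obtain K2 where K2: "\<And>k. k \<ge> K2 \<Longrightarrow> \<tau> k < \<gamma>" by (auto simp: eventually_sequentially)
      define k where "k = max K1 K2"
      define tt where "tt = \<tau> k"
      have tt0: "tt > 0" by (simp add: tt_def tau_pos)
      have ttg: "tt < \<gamma>" unfolding tt_def by (rule K2) (simp add: k_def)
      have conv_k: "\<And>s. s \<in> {0..T} \<Longrightarrow> Hnorm \<rho> (\<lambda>x. interp tt (Xs k) s x - X s x) < \<beta>"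
        unfolding tt_def by (rule K1) (simp_all add: k_def)
      define Y where "Y = Xs k"
      define m where "m = nat \<lfloor>a / tt\<rfloor>"
      define M where "M = nat \<lfloor>b / tt\<rfloor>"
      have ma1: "real m * tt \<le> a" and ma2: "a < real m * tt + tt"
        unfolding m_def using floor_facts[OF a0 tt0] by auto
      have Mb1: "real M * tt \<le> b" and Mb2: "b < real M * tt + tt"
        unfolding M_def using floor_facts[of b tt] a0 hab tt0 by auto
      have mM: "m \<le> M" unfolding m_def M_def using tt0 hab by (intro nat_mono floor_mono divide_right_mono) auto
      have Ym: "interp tt Y a = Y m" by (simp add: interp_def m_def)
      have YM: "interp tt Y b = Y M" by (simp add: interp_def M_def)
      have ttg': "tt \<le> h0" using ttg by (simp add: \<gamma>_def)
      have bndj: "Hnorm \<rho> (\<lambda>x. G (Y j) x - g x) \<le> \<epsilon>" if j1: "m \<le> j" and j2: "j \<le> m + (M - m)" for j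
      proof -
        define sj where "sj = real j * tt"
        have "real m \<le> real j" using j1 by simp
        hence sj1: "real m * tt \<le> sj" unfolding sj_def using tt0 by (intro mult_right_mono) auto
        have "real j \<le> real M" using j2 mM by simp
        hence sj2: "sj \<le> real M * tt" unfolding sj_def using tt0 by (intro mult_right_mono) auto
        have "0 \<le> sj" unfolding sj_def using tt0 by simp
        moreover have "sj \<le> T" using sj2 Mb1 bT by linarith
        ultimately have sjT: "sj \<in> {0..T}" by simp
        have "\<bar>sj - t\<bar> \<le> 2 * h0" using sj1 sj2 ma2 Mb1 ha hb ttg' by (auto simp: abs_le_iff)
        have YjH: "inH \<rho> (Y j)" by (simp add: Y_def XsH)
        have XsjH: "inH \<rho> (X sj)" using sjT by (intro X_in) auto
        have i1: "Hnorm \<rho> (\<lambda>x. Y j x - X sj x) < \<beta>"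
          using conv_k[OF sjT] unfolding sj_def interp_grid[OF tt0] Y_def .
        have i2: "Hnorm \<rho> (\<lambda>x. X sj x - \<xi> x) \<le> L' * (2 * h0)"
        proof -
          have tT: "t \<in> {0..T}" using t0 by (simp add: T_def)
          have "Hnorm \<rho> (\<lambda>x. X sj x - \<xi> x) \<le> L' * \<bar>sj - t\<bar>" unfolding \<xi>_def by (rule Lip[OF sjT tT])
          also have "\<dots> \<le> L' * (2 * h0)" using L'0 \<open>\<bar>sj - t\<bar> \<le> 2 * h0\<close> by (rule mult_left_mono[rotated])
          finally show ?thesis .
        qed
        have "Hnorm \<rho> (\<lambda>x. Y j x - \<xi> x) \<le> Hnorm \<rho> (\<lambda>x. Y j x - X sj x) + Hnorm \<rho> (\<lambda>x. X sj x - \<xi> x)"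
          by (rule Hnorm_tri[OF inH_diff[OF YjH XsjH] inH_diff[OF XsjH \<xi>H]]) simp
        also have "\<dots> < \<delta>1" using i1 i2 h0L \<beta>_def by (simp add: algebra_simps)
        finally have "Hnorm \<rho> (\<lambda>x. Y j x - X t x) < \<delta>1" unfolding \<xi>_def .
        from Gc[OF YjH this] show ?thesis unfolding g_def \<xi>_def by simp
      qed
      have YH: "\<And>n. inH \<rho> (Y n)" by (simp add: Y_def XsH)
      have GYH: "\<And>n. inH \<rho> (G (Y n))" using GH YH by blast
      have E0': "\<And>n. Hnorm \<rho> (\<lambda>x. Y (Suc n) x - Y n x + (tt / 2) *\<^sub>R (G (Y (Suc n)) x + G (Y n) x)) = 0"
        unfolding Y_def tt_def by (rule E0)
      have disc: "Hnorm \<rho> (\<lambda>x. Y (m + (M - m)) x - Y m x + (real (M - m) * tt) *\<^sub>R g x) \<le> real (M - m) * tt * \<epsilon>"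
        by (rule disc_est[where \<rho>=\<rho> and Y=Y and G=G and g=g and \<tau>=tt and m=m and K="M - m" and c=\<epsilon> and k="M - m", OF YH GYH gH tt0 E0' bndj]) auto
      define D where "D = real (M - m) * tt"
      have DD: "D = real M * tt - real m * tt" using mM by (simp add: D_def of_nat_diff algebra_simps)
      have disc': "Hnorm \<rho> (\<lambda>x. Y M x - Y m x + D *\<^sub>R g x) \<le> D * \<epsilon>"
        using disc mM unfolding D_def by simp
      have XaH: "inH \<rho> (X a)" using a0 by (intro X_in)
      have XbH: "inH \<rho> (X b)" using a0 hab by (intro X_in) auto
      have P1: "Hnorm \<rho> (\<lambda>x. X b x - Y M x) < \<beta>"
        using conv_k[OF bT'] unfolding YM[unfolded Y_def] Y_def by (simp only: Hnorm_minus_commute)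
      have P2: "Hnorm \<rho> (\<lambda>x. Y m x - X a x) < \<beta>"
        using conv_k[OF aT] unfolding Ym[unfolded Y_def] Y_def .
      have P4: "Hnorm \<rho> (\<lambda>x. ((b - a) - D) *\<^sub>R g x) \<le> tt * C"
      proof -
        have "\<bar>(b - a) - D\<bar> \<le> tt" unfolding DD using ma1 ma2 Mb1 Mb2 by (auto simp: abs_le_iff)
        thus ?thesis unfolding Hnorm_scale C_def[symmetric] using C0 by (intro mult_right_mono) auto
      qed
      have D\<epsilon>: "D * \<epsilon> \<le> (b - a) * \<epsilon> + tt * \<epsilon>"
      proof -
        have "D \<le> (b - a) + tt" unfolding DD using ma2 Mb1 by linarith
        hence "D * \<epsilon> \<le> ((b - a) + tt) * \<epsilon>" using ep by (intro mult_right_mono) auto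
        thus ?thesis by (simp add: algebra_simps)
      qed
      have ttC: "tt * (\<epsilon> + C) \<le> \<theta> / 2"
      proof -
        have "tt \<le> \<theta> / (2 * (\<epsilon> + C + 1))" using ttg by (simp add: \<gamma>_def)
        hence "tt * (2 * (\<epsilon> + C + 1)) \<le> \<theta>" using ep C0 by (simp add: field_simps)
        thus ?thesis using tt0 by (simp add: algebra_simps)
      qed
      have H1: "inH \<rho> (\<lambda>x. X b x - Y M x)" by (rule inH_diff[OF XbH YH])
      have H2: "inH \<rho> (\<lambda>x. Y m x - X a x)" by (rule inH_diff[OF YH XaH])
      have H3: "inH \<rho> (\<lambda>x. Y M x - Y m x + D *\<^sub>R g x)" by (rule inH_add[OF inH_diff[OF YH YH] inH_scale[OF gH]])
      have H4: "inH \<rho> (\<lambda>x. ((b - a) - D) *\<^sub>R g x)" by (rule inH_scale[OF gH])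
      have H12: "inH \<rho> (\<lambda>x. (X b x - Y M x) + (Y m x - X a x))" by (rule inH_add[OF H1 H2])
      have H123: "inH \<rho> (\<lambda>x. ((X b x - Y M x) + (Y m x - X a x)) + (Y M x - Y m x + D *\<^sub>R g x))" by (rule inH_add[OF H12 H3])
      have "Hnorm \<rho> (\<lambda>x. X b x - X a x + (b - a) *\<^sub>R g x)
         \<le> Hnorm \<rho> (\<lambda>x. ((X b x - Y M x) + (Y m x - X a x)) + (Y M x - Y m x + D *\<^sub>R g x)) + Hnorm \<rho> (\<lambda>x. ((b - a) - D) *\<^sub>R g x)"
        by (rule Hnorm_tri[OF H123 H4]) (simp add: algebra_simps)
      also have "Hnorm \<rho> (\<lambda>x. ((X b x - Y M x) + (Y m x - X a x)) + (Y M x - Y m x + D *\<^sub>R g x))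
         \<le> Hnorm \<rho> (\<lambda>x. (X b x - Y M x) + (Y m x - X a x)) + Hnorm \<rho> (\<lambda>x. Y M x - Y m x + D *\<^sub>R g x)"
        by (rule Hnorm_triangle[OF H12 H3])
      also have "Hnorm \<rho> (\<lambda>x. (X b x - Y M x) + (Y m x - X a x)) \<le> Hnorm \<rho> (\<lambda>x. X b x - Y M x) + Hnorm \<rho> (\<lambda>x. Y m x - X a x)"
        by (rule Hnorm_triangle[OF H1 H2])
      finally have fin: "Hnorm \<rho> (\<lambda>x. X b x - X a x + (b - a) *\<^sub>R g x)
         \<le> Hnorm \<rho> (\<lambda>x. X b x - Y M x) + Hnorm \<rho> (\<lambda>x. Y m x - X a x) + Hnorm \<rho> (\<lambda>x. Y M x - Y m x + D *\<^sub>R g x)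
           + Hnorm \<rho> (\<lambda>x. ((b - a) - D) *\<^sub>R g x)" by simp
      have "\<beta> \<le> \<theta> / 4" by (simp add: \<beta>_def)
      show "Hnorm \<rho> (\<lambda>x. X b x - X a x + (b - a) *\<^sub>R g x) \<le> (b - a) * \<epsilon> + \<theta>"
        using fin P1 P2 disc' P4 D\<epsilon> ttC \<open>\<beta> \<le> \<theta> / 4\<close> by (simp add: algebra_simps)
    qed
  qed
qed



theorem mainTheorem15:
  fixes \<rho>0 :: "'a::euclidean_space measure"
    and \<phi> :: "'a measure \<Rightarrow> real"
    and G :: "('a \<Rightarrow> 'a) \<Rightarrow> ('a \<Rightarrow> 'a)"
    and lam :: real
    and \<tau> :: "nat \<Rightarrow> real"
    and Xs :: "nat \<Rightarrow> nat \<Rightarrow> 'a \<Rightarrow> 'a"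
    and X :: "real \<Rightarrow> 'a \<Rightarrow> 'a"
  assumes rho0: "P2 \<rho>0"
    and grad: "H_gradient \<rho>0 (lift \<phi> \<rho>0) G"
    and convex: "H_lambda_convex \<rho>0 lam (lift \<phi> \<rho>0)"
    and bdd_below: "\<exists>c. \<forall>\<xi>. inH \<rho>0 \<xi> \<longrightarrow> c \<le> lift \<phi> \<rho>0 \<xi>"
    and tau_pos: "\<And>k. \<tau> k > 0"
    and tau_lim: "\<tau> \<longlonglongrightarrow> 0"
    and tau_step: "\<And>k. lam / 2 + 1 / \<tau> k > 0"
    and tau_neg: "\<And>k. lam < 0 \<Longrightarrow> \<bar>lam\<bar> * \<tau> k < 1"
    and scheme: "\<And>k. is_scheme \<rho>0 (lift \<phi> \<rho>0) G (\<tau> k) (Xs k)"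
    and init: "(\<lambda>k. Hnorm \<rho>0 (\<lambda>x. Xs k 0 x - x)) \<longlonglongrightarrow> 0"
    and init_grad: "\<exists>C. \<forall>k. Hnorm \<rho>0 (G (Xs k 0)) \<le> C"
    and X_in: "\<And>t. t \<ge> 0 \<Longrightarrow> inH \<rho>0 (X t)"
    and conv: "\<And>T \<epsilon>. T \<ge> 0 \<Longrightarrow> \<epsilon> > 0 \<Longrightarrow> \<exists>K. \<forall>k\<ge>K. \<forall>t\<in>{0..T}.
                  Hnorm \<rho>0 (\<lambda>x. interp (\<tau> k) (Xs k) t x - X t x) < \<epsilon>"
    and X_lip: "\<And>T. T \<ge> 0 \<Longrightarrow> \<exists>L. \<forall>s\<in>{0..T}. \<forall>t\<in>{0..T}.
                  Hnorm \<rho>0 (\<lambda>x. X s x - X t x) \<le> L * \<bar>s - t\<bar>"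
  shows "H_loc_abs_cont \<rho>0 X
    \<and> (AE t in lborel. t > 0 \<longrightarrow>
         ((\<lambda>h. Hnorm \<rho>0 (\<lambda>x. (X (t + h) x - X t x) /\<^sub>R h + G (X t) x)) \<longlongrightarrow> 0) (at 0))
    \<and> Hnorm \<rho>0 (\<lambda>x. X 0 x - x) = 0"
proof -
  have P: "prob_space \<rho>0" "sets \<rho>0 = sets borel" "integrable \<rho>0 (\<lambda>x. (norm x)\<^sup>2)"
    using rho0 unfolding P2_def by auto
  have idH: "inH \<rho>0 (\<lambda>x. x)" unfolding inH_def using measurable_ident_sets[OF P(2)] P(3) by simp
  have XsH: "\<And>k n. inH \<rho>0 (Xs k n)" using scheme unfolding is_scheme_def by blast
  have mini: "\<And>k n \<xi>. inH \<rho>0 \<xi> \<Longrightarrow> scheme_fun \<rho>0 (lift \<phi> \<rho>0) G (\<tau> k) (Xs k n) (Xs k (Suc n))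
      \<le> scheme_fun \<rho>0 (lift \<phi> \<rho>0) G (\<tau> k) (Xs k n) \<xi>"
    using scheme unfolding is_scheme_def by blast
  have GH: "\<And>\<xi>. inH \<rho>0 \<xi> \<Longrightarrow> inH \<rho>0 (G \<xi>)" by (rule G_inH[OF grad convex])
  have E0: "\<And>k n. Hnorm \<rho>0 (\<lambda>x. Xs k (Suc n) x - Xs k n x + (\<tau> k / 2) *\<^sub>R (G (Xs k (Suc n)) x + G (Xs k n) x)) = 0"
    by (rule euler_lagrange[OF grad convex tau_pos XsH XsH mini])
  have part1: "H_loc_abs_cont \<rho>0 X"
    unfolding H_loc_abs_cont_def
  proof (intro allI impI)
    fix T \<epsilon> :: real assume T0: "0 \<le> T" and ep: "0 < \<epsilon>"
    obtain L where L: "\<forall>s\<in>{0..T}. \<forall>t\<in>{0..T}. Hnorm \<rho>0 (\<lambda>x. X s x - X t x) \<le> L * \<bar>s - t\<bar>"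
      using X_lip[OF T0] by blast
    define L' where "L' = \<bar>L\<bar>"
    have L'0: "0 \<le> L'" by (simp add: L'_def)
    define \<delta> where "\<delta> = \<epsilon> / (L' + 1)"
    have d0: "\<delta> > 0" using ep L'0 by (simp add: \<delta>_def)
    have Ld: "L' * \<delta> < \<epsilon>"
    proof -
      have "L' * \<delta> = \<epsilon> * (L' / (L' + 1))" using L'0 by (simp add: \<delta>_def field_simps)
      also have "\<dots> < \<epsilon> * 1" using ep L'0 by (intro mult_strict_left_mono) auto
      finally show ?thesis by simp
    qed
    show "\<exists>\<delta>>0. \<forall>(n::nat) a b.
       (\<forall>i<n. 0 \<le> a i \<and> a i \<le> b i \<and> b i \<le> T) \<and>
       (\<forall>i<n. \<forall>j<n. i \<noteq> j \<longrightarrow> b i \<le> a j \<or> b j \<le> a i) \<and>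
       (\<Sum>i<n. b i - a i) < \<delta> \<longrightarrow>
       (\<Sum>i<n. Hnorm \<rho>0 (\<lambda>x. X (b i) x - X (a i) x)) < \<epsilon>"
    proof (intro exI[of _ \<delta>] conjI allI impI)
      show "\<delta> > 0" by (rule d0)
      fix n :: nat and a b :: "nat \<Rightarrow> real"
      assume H: "(\<forall>i<n. 0 \<le> a i \<and> a i \<le> b i \<and> b i \<le> T) \<and>
       (\<forall>i<n. \<forall>j<n. i \<noteq> j \<longrightarrow> b i \<le> a j \<or> b j \<le> a i) \<and> (\<Sum>i<n. b i - a i) < \<delta>"
      have each: "Hnorm \<rho>0 (\<lambda>x. X (b i) x - X (a i) x) \<le> L' * (b i - a i)" if i: "i \<in> {..<n}" for i
      proof -
        have ab: "0 \<le> a i" "a i \<le> b i" "b i \<le> T" using H i by auto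
        have bi: "b i \<in> {0..T}" and ai: "a i \<in> {0..T}" using ab by auto
        have "Hnorm \<rho>0 (\<lambda>x. X (b i) x - X (a i) x) \<le> L * \<bar>b i - a i\<bar>" by (rule bspec[OF bspec[OF L bi] ai])
        also have "\<dots> \<le> L' * \<bar>b i - a i\<bar>" unfolding L'_def by (intro mult_right_mono) auto
        also have "\<bar>b i - a i\<bar> = b i - a i" using ab by simp
        finally show ?thesis .
      qed
      have "(\<Sum>i<n. Hnorm \<rho>0 (\<lambda>x. X (b i) x - X (a i) x)) \<le> (\<Sum>i<n. L' * (b i - a i))"
        by (rule sum_mono[OF each])
      also have "\<dots> = L' * (\<Sum>i<n. b i - a i)" by (simp add: sum_distrib_left)
      also have "\<dots> \<le> L' * \<delta>" using H L'0 by (intro mult_left_mono) auto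
      also have "\<dots> < \<epsilon>" by (rule Ld)
      finally show "(\<Sum>i<n. Hnorm \<rho>0 (\<lambda>x. X (b i) x - X (a i) x)) < \<epsilon>" .
    qed
  qed
  have part3: "Hnorm \<rho>0 (\<lambda>x. X 0 x - x) = 0"
  proof -
    have "Hnorm \<rho>0 (\<lambda>x. X 0 x - x) \<le> 0"
    proof (rule field_le_epsilon)
      fix \<theta> :: real assume th: "0 < \<theta>"
      have th2: "\<theta> / 2 > 0" using th by simp
      obtain K1 where K1: "\<forall>k\<ge>K1. \<forall>t\<in>{0..0}. Hnorm \<rho>0 (\<lambda>x. interp (\<tau> k) (Xs k) t x - X t x) < \<theta> / 2"
        using conv[OF order_refl th2] by blast
      have "eventually (\<lambda>k. Hnorm \<rho>0 (\<lambda>x. Xs k 0 x - x) < \<theta> / 2) sequentially"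
        by (rule order_tendstoD(2)[OF init th2])
      then obtain K2 where K2: "\<And>k. k \<ge> K2 \<Longrightarrow> Hnorm \<rho>0 (\<lambda>x. Xs k 0 x - x) < \<theta> / 2"
        by (auto simp: eventually_sequentially)
      define k where "k = max K1 K2"
      have "Hnorm \<rho>0 (\<lambda>x. interp (\<tau> k) (Xs k) 0 x - X 0 x) < \<theta> / 2" using K1 by (simp add: k_def)
      hence a1: "Hnorm \<rho>0 (\<lambda>x. Xs k 0 x - X 0 x) < \<theta> / 2" by (simp add: interp_def)
      have a2: "Hnorm \<rho>0 (\<lambda>x. Xs k 0 x - x) < \<theta> / 2" using K2 by (simp add: k_def)
      have X0H: "inH \<rho>0 (X 0)" using X_in by simp
      have "Hnorm \<rho>0 (\<lambda>x. X 0 x - x) \<le> Hnorm \<rho>0 (\<lambda>x. X 0 x - Xs k 0 x) + Hnorm \<rho>0 (\<lambda>x. Xs k 0 x - x)"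
        by (rule Hnorm_tri[OF inH_diff[OF X0H XsH] inH_diff[OF XsH idH]]) simp
      also have "Hnorm \<rho>0 (\<lambda>x. X 0 x - Xs k 0 x) = Hnorm \<rho>0 (\<lambda>x. Xs k 0 x - X 0 x)" by (rule Hnorm_minus_commute)
      finally show "Hnorm \<rho>0 (\<lambda>x. X 0 x - x) \<le> 0 + \<theta>" using a1 a2 by linarith
    qed
    thus ?thesis using Hnorm_nonneg[of \<rho>0 "\<lambda>x. X 0 x - x"] by linarith
  qed
  have part2: "((\<lambda>h. Hnorm \<rho>0 (\<lambda>x. (X (t + h) x - X t x) /\<^sub>R h + G (X t) x)) \<longlongrightarrow> 0) (at 0)"
    if t0: "t > 0" for t
  proof (rule tendstoI)
    fix e :: real assume e0: "e > 0"
    have e2: "e / 2 > 0" using e0 by simp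
    have XtH: "inH \<rho>0 (X t)" using X_in t0 by simp
    obtain \<delta>1 where d1: "\<delta>1 > 0" and Gc0: "\<forall>y. inH \<rho>0 y \<and> Hnorm \<rho>0 (\<lambda>z. y z - X t z) < \<delta>1 \<longrightarrow>
        Hnorm \<rho>0 (\<lambda>z. G y z - G (X t) z) < e / 2"
      using G_cont[OF grad convex XtH e2] by blast
    have Gc: "\<And>y. inH \<rho>0 y \<Longrightarrow> Hnorm \<rho>0 (\<lambda>z. y z - X t z) < \<delta>1 \<Longrightarrow> Hnorm \<rho>0 (\<lambda>z. G y z - G (X t) z) < e / 2"
      using Gc0 by blast
    obtain h0 where h00: "h0 > 0" and est: "\<forall>a b. t - h0 \<le> a \<longrightarrow> a \<le> b \<longrightarrow> b \<le> t + h0 \<longrightarrow>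
           Hnorm \<rho>0 (\<lambda>x. X b x - X a x + (b - a) *\<^sub>R G (X t) x) \<le> (b - a) * (e / 2)"
      using deriv_est[OF tau_pos tau_lim XsH GH E0 X_in conv X_lip t0 e2 d1 Gc] by blast
    show "eventually (\<lambda>h. dist (Hnorm \<rho>0 (\<lambda>x. (X (t + h) x - X t x) /\<^sub>R h + G (X t) x)) 0 < e) (at 0)"
      unfolding eventually_at
    proof (intro exI[of _ h0] conjI ballI impI)
      show "h0 > 0" by (rule h00)
      fix h :: real assume "h \<in> UNIV" and hh: "h \<noteq> 0 \<and> dist h 0 < h0"
      hence hne: "h \<noteq> 0" and hl: "\<bar>h\<bar> < h0" by auto
      define f where "f = Hnorm \<rho>0 (\<lambda>x. (X (t + h) x - X t x) /\<^sub>R h + G (X t) x)"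
      have "f \<le> e / 2"
      proof (cases "h > 0")
        case True
        have b: "Hnorm \<rho>0 (\<lambda>x. X (t + h) x - X t x + ((t + h) - t) *\<^sub>R G (X t) x) \<le> ((t + h) - t) * (e / 2)"
          by (rule est[rule_format]) (use hl True h00 in auto)
        have "(\<lambda>x. (X (t + h) x - X t x) /\<^sub>R h + G (X t) x)
            = (\<lambda>x. (1 / h) *\<^sub>R (X (t + h) x - X t x + ((t + h) - t) *\<^sub>R G (X t) x))"
          using hne by (intro ext) (simp add: algebra_simps inverse_eq_divide)
        hence "f = \<bar>1 / h\<bar> * Hnorm \<rho>0 (\<lambda>x. X (t + h) x - X t x + ((t + h) - t) *\<^sub>R G (X t) x)"
          unfolding f_def by (simp only: Hnorm_scale)
        hence "f = (1 / h) * Hnorm \<rho>0 (\<lambda>x. X (t + h) x - X t x + ((t + h) - t) *\<^sub>R G (X t) x)"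
          using True by simp
        also have "\<dots> \<le> (1 / h) * (((t + h) - t) * (e / 2))" using b True by (intro mult_left_mono) auto
        also have "\<dots> = e / 2" using hne by simp
        finally show ?thesis .
      next
        case False
        hence hn: "h < 0" using hne by simp
        have b: "Hnorm \<rho>0 (\<lambda>x. X t x - X (t + h) x + (t - (t + h)) *\<^sub>R G (X t) x) \<le> (t - (t + h)) * (e / 2)"
          by (rule est[rule_format]) (use hl hn h00 in auto)
        have "(\<lambda>x. (X (t + h) x - X t x) /\<^sub>R h + G (X t) x)
            = (\<lambda>x. (1 / (- h)) *\<^sub>R (X t x - X (t + h) x + (t - (t + h)) *\<^sub>R G (X t) x))"
          using hne by (intro ext) (simp add: algebra_simps inverse_eq_divide)
        hence "f = \<bar>1 / (- h)\<bar> * Hnorm \<rho>0 (\<lambda>x. X t x - X (t + h) x + (t - (t + h)) *\<^sub>R G (X t) x)"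
          unfolding f_def by (simp only: Hnorm_scale)
        hence "f = (1 / (- h)) * Hnorm \<rho>0 (\<lambda>x. X t x - X (t + h) x + (t - (t + h)) *\<^sub>R G (X t) x)"
          using hn by simp
        also have "\<dots> \<le> (1 / (- h)) * ((t - (t + h)) * (e / 2))" using b hn by (intro mult_left_mono) auto
        also have "\<dots> = e / 2" using hne by simp
        finally show ?thesis .
      qed
      hence "f < e" using e0 by linarith
      thus "dist (Hnorm \<rho>0 (\<lambda>x. (X (t + h) x - X t x) /\<^sub>R h + G (X t) x)) 0 < e"
        using Hnorm_nonneg[of \<rho>0] by (simp add: f_def)
    qed
  qed
  have "AE t in lborel. t > 0 \<longrightarrow>
         ((\<lambda>h. Hnorm \<rho>0 (\<lambda>x. (X (t + h) x - X t x) /\<^sub>R h + G (X t) x)) \<longlongrightarrow> 0) (at 0)"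
    using part2 by (intro AE_I2) blast
  thus ?thesis using part1 part3 by blast
qed

end
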